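(* Let $1<p<\infty$, $x_0\in X$, $B_\rho=B(x_0,\rho)$, and let $\Omega\subset X$ be a bounded open set with $x_0\in\Omega$. If \[ \int_0^\delta\Bigl(\frac{\rho}{\mu(B_\rho)}\Bigr)^{1/(p-1)}d\rho=\infty\quad\text{for some }\delta>0, \] or equivalently $\sum_{k=k_0}^\infty\bigl(2^{-kp}/\mu(B_{2^{-k}})\bigr)^{1/(p-1)}=\infty$ for some integer $k_0\ge0$, then $\mathrm{cap}_p(\{x_0\},\Omega)=C_p(\{x_0\})=0$.
   Context: $(X,d,\mu)$ is a metric space (at least two points) with a positive complete Borel measure $\mu$, $0<\mu(B)<\infty$ for all balls; no doubling or Poincaré assumption. $g_u$ is the minimal $p$-weak upper gradient (a Borel $g\ge0$ with $|u(\gamma(0))-u(\gamma(l_\gamma))|\le\int_\gamma g\,ds$ for all nonconstant compact rectifiable curves outside a family of zero $p$-modulus). $N^{1,p}(X)$: everywhere-defined $u$ with $\|u\|_{N^{1,p}(X)}^p=\int|u|^p+\inf_g\int g^p<\infty$. $C_p(E)=\inf\|u\|^p_{N^{1,p}(X)}$ over $u\in N^{1,p}(X)$ with $u\ge1$ on $E$; $\mathrm{cap}_p(E,\Omega)=\inf\int_\Omega g_u^p\,d\mu$ over $u\in N^{1,p}(X)$, $u\ge1$ on $E$, $u=0$ on $X\setminus\Omega$. *)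

theory Defs
  imports "HOL-Analysis.Analysis"
begin

definition epow :: "real \<Rightarrow> ennreal \<Rightarrow> ennreal" where
  "epow p x = (if x = \<infinity> then \<infinity> else ennreal (enn2real x powr p))"

definition curve_variation :: "(real \<Rightarrow> 'a::metric_space) \<Rightarrow> real \<Rightarrow> real \<Rightarrow> ennreal" where
  "curve_variation \<gamma> a b =
     (SUP nt \<in> {(n, t). t (0::nat) = a \<and> t n = b \<and> (\<forall>i<n. t i \<le> t (Suc i))}.
        ennreal (\<Sum>i<fst nt. dist (\<gamma> (snd nt i)) (\<gamma> (snd nt (Suc i)))))"

text \<open>A nonconstant compact rectifiable curve, parametrized by arc length on [0,l]
  (l = its length, l > 0).  Curves are represented as pairs (gamma, l).\<close>
definition arclength_curve :: "(real \<Rightarrow> 'a::metric_space) \<Rightarrow> real \<Rightarrow> bool" where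
  "arclength_curve \<gamma> l \<longleftrightarrow> 0 < l \<and> continuous_on {0..l} \<gamma> \<and>
     (\<forall>s t. 0 \<le> s \<and> s \<le> t \<and> t \<le> l \<longrightarrow> curve_variation \<gamma> s t = ennreal (t - s))"

definition line_integral :: "('a \<Rightarrow> ennreal) \<Rightarrow> (real \<Rightarrow> 'a) \<Rightarrow> real \<Rightarrow> ennreal" where
  "line_integral g \<gamma> l = (\<integral>\<^sup>+ t \<in> {0..l}. g (\<gamma> t) \<partial>lborel)"

definition p_modulus :: "'a::metric_space measure \<Rightarrow> real \<Rightarrow> ((real \<Rightarrow> 'a) \<times> real) set \<Rightarrow> ennreal" where
  "p_modulus M p \<Gamma> = (INF \<rho> \<in> {\<rho> :: 'a \<Rightarrow> ennreal. \<rho> \<in> borel_measurable borel \<and>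
        (\<forall>(\<gamma>, l) \<in> \<Gamma>. line_integral \<rho> \<gamma> l \<ge> 1)}. \<integral>\<^sup>+ x. epow p (\<rho> x) \<partial>M)"

definition p_weak_upper_gradient :: "'a::metric_space measure \<Rightarrow> real \<Rightarrow> ('a \<Rightarrow> real) \<Rightarrow> ('a \<Rightarrow> ennreal) \<Rightarrow> bool" where
  "p_weak_upper_gradient M p u g \<longleftrightarrow> g \<in> borel_measurable borel \<and>
     (\<exists>\<Gamma>. p_modulus M p \<Gamma> = 0 \<and>
        (\<forall>\<gamma> l. arclength_curve \<gamma> l \<and> (\<gamma>, l) \<notin> \<Gamma> \<longrightarrow>
           ennreal \<bar>u (\<gamma> 0) - u (\<gamma> l)\<bar> \<le> line_integral g \<gamma> l))"

text \<open>p-th power of the Newtonian norm (infinite if u is not in N^{1,p}).\<close>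
definition newton_norm_p :: "'a::metric_space measure \<Rightarrow> real \<Rightarrow> ('a \<Rightarrow> real) \<Rightarrow> ennreal" where
  "newton_norm_p M p u = (\<integral>\<^sup>+ x. ennreal (\<bar>u x\<bar> powr p) \<partial>M) +
      (INF g \<in> {g. p_weak_upper_gradient M p u g}. \<integral>\<^sup>+ x. epow p (g x) \<partial>M)"

definition newtonian :: "'a::metric_space measure \<Rightarrow> real \<Rightarrow> ('a \<Rightarrow> real) set" where
  "newtonian M p = {u. u \<in> borel_measurable M \<and> newton_norm_p M p u < \<infinity>}"

definition sobolev_cap :: "'a::metric_space measure \<Rightarrow> real \<Rightarrow> 'a set \<Rightarrow> ennreal" where
  "sobolev_cap M p E = (INF u \<in> {u \<in> newtonian M p. \<forall>x\<in>E. u x \<ge> 1}. newton_norm_p M p u)"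

text \<open>Variational capacity cap_p(E, Omega); the integral of g_u^p over Omega is written as the
  infimum over all p-weak upper gradients g of u of the integral of g^p over Omega.\<close>
definition var_cap :: "'a::metric_space measure \<Rightarrow> real \<Rightarrow> 'a set \<Rightarrow> 'a set \<Rightarrow> ennreal" where
  "var_cap M p E \<Omega> = (INF u \<in> {u \<in> newtonian M p. (\<forall>x\<in>E. u x \<ge> 1) \<and> (\<forall>x\<in>-\<Omega>. u x = 0)}.
      (INF g \<in> {g. p_weak_upper_gradient M p u g}. \<integral>\<^sup>+ x \<in> \<Omega>. epow p (g x) \<partial>M))"

end

theory Submission
  imports Defs
begin


lemma crossing_up:
  fixes r :: "real \<Rightarrow> real"
  assumes cont: "continuous_on {0..l} r"
    and lip: "\<And>s t. s \<in> {0..l} \<Longrightarrow> t \<in> {0..l} \<Longrightarrow> \<bar>r s - r t\<bar> \<le> \<bar>s - t\<bar>"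
    and l: "0 \<le> l" and r0: "r 0 \<le> \<alpha>" and rl: "\<beta> \<le> r l"
  shows "\<exists>s1 s2. 0 \<le> s1 \<and> s1 \<le> s2 \<and> s2 \<le> l \<and> \<beta> - \<alpha> \<le> s2 - s1 \<and>
           (\<forall>t. s1 < t \<and> t < s2 \<longrightarrow> \<alpha> < r t \<and> r t < \<beta>)"
proof -
  define S where "S = {0..l} \<inter> r -` {\<beta>..}"
  have clS: "closed S" unfolding S_def by (rule continuous_closed_preimage[OF cont]) auto
  have "l \<in> S" using l rl by (auto simp: S_def)
  hence neS: "S \<noteq> {}" by auto
  have bS: "bdd_below S" unfolding S_def by (rule bdd_belowI[of _ 0]) auto
  define s2 where "s2 = Inf S"
  have s2S: "s2 \<in> S" unfolding s2_def using closed_contains_Inf[OF neS bS clS] .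
  have below: "r t < \<beta>" if "0 \<le> t" "t < s2" for t
  proof (rule ccontr)
    assume "\<not> r t < \<beta>"
    hence "t \<in> S" using that s2S by (auto simp: S_def)
    hence "s2 \<le> t" unfolding s2_def using bS by (simp add: cInf_lower)
    thus False using that by simp
  qed
  have s2l: "0 \<le> s2" "s2 \<le> l" "\<beta> \<le> r s2" using s2S by (auto simp: S_def)
  define T where "T = {0..s2} \<inter> r -` {..\<alpha>}"
  have cont2: "continuous_on {0..s2} r" by (rule continuous_on_subset[OF cont]) (use s2l in auto)
  have clT: "closed T" unfolding T_def by (rule continuous_closed_preimage[OF cont2]) auto
  have "0 \<in> T" using r0 s2l by (auto simp: T_def)
  hence neT: "T \<noteq> {}" by auto
  have bT: "bdd_above T" unfolding T_def by (rule bdd_aboveI[of _ s2]) auto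
  define s1 where "s1 = Sup T"
  have s1T: "s1 \<in> T" unfolding s1_def using closed_contains_Sup[OF neT bT clT] .
  have above: "\<alpha> < r t" if "s1 < t" "t \<le> s2" for t
  proof (rule ccontr)
    assume "\<not> \<alpha> < r t"
    hence "t \<in> T" using that s1T by (auto simp: T_def)
    hence "t \<le> s1" unfolding s1_def using bT by (simp add: cSup_upper)
    thus False using that by simp
  qed
  have s1l: "0 \<le> s1" "s1 \<le> s2" "r s1 \<le> \<alpha>" using s1T by (auto simp: T_def)
  have "\<bar>r s2 - r s1\<bar> \<le> \<bar>s2 - s1\<bar>" using lip[of s2 s1] s1l s2l by auto
  hence "\<beta> - \<alpha> \<le> s2 - s1" using s1l s2l by linarith
  moreover have "\<forall>t. s1 < t \<and> t < s2 \<longrightarrow> \<alpha> < r t \<and> r t < \<beta>"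
    using above below s1l by auto
  ultimately show ?thesis using s1l s2l by blast
qed



definition clampr :: "real \<Rightarrow> real \<Rightarrow> real \<Rightarrow> real" where
  "clampr a b s = max a (min b s)"

lemma crossing_clamp:
  fixes r :: "real \<Rightarrow> real"
  assumes cont: "continuous_on {0..l} r"
    and lip: "\<And>s t. s \<in> {0..l} \<Longrightarrow> t \<in> {0..l} \<Longrightarrow> \<bar>r s - r t\<bar> \<le> \<bar>s - t\<bar>"
    and l: "0 \<le> l" and ab: "a < b"
  shows "\<exists>s1 s2. 0 \<le> s1 \<and> s1 \<le> s2 \<and> s2 \<le> l \<and>
           \<bar>clampr a b (r 0) - clampr a b (r l)\<bar> \<le> s2 - s1 \<and>
           (\<forall>t. s1 < t \<and> t < s2 \<longrightarrow> a < r t \<and> r t < b)"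
proof -
  define C0 where "C0 = clampr a b (r 0)"
  define Cl where "Cl = clampr a b (r l)"
  have rng: "a \<le> C0" "C0 \<le> b" "a \<le> Cl" "Cl \<le> b" using ab by (auto simp: C0_def Cl_def clampr_def)
  consider "C0 < Cl" | "C0 = Cl" | "Cl < C0" by linarith
  thus ?thesis
  proof cases
    case 1
    have "r 0 \<le> C0" "Cl \<le> r l" using 1 ab by (auto simp: C0_def Cl_def clampr_def)
    from crossing_up[OF cont lip l this]
    obtain s1 s2 where "0 \<le> s1 \<and> s1 \<le> s2 \<and> s2 \<le> l \<and> Cl - C0 \<le> s2 - s1 \<and>
           (\<forall>t. s1 < t \<and> t < s2 \<longrightarrow> C0 < r t \<and> r t < Cl)" by blast
    thus ?thesis using 1 rng unfolding C0_def[symmetric] Cl_def[symmetric]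
      by (intro exI[of _ s1] exI[of _ s2]) force
  next
    case 2
    thus ?thesis using l unfolding C0_def[symmetric] Cl_def[symmetric]
      by (intro exI[of _ 0] exI[of _ 0]) auto
  next
    case 3
    define r' where "r' = (\<lambda>t. r (l - t))"
    have cont': "continuous_on {0..l} r'" unfolding r'_def
      by (rule continuous_on_compose2[OF cont]) (auto intro!: continuous_intros)
    have lip': "\<bar>r' s - r' t\<bar> \<le> \<bar>s - t\<bar>" if "s \<in> {0..l}" "t \<in> {0..l}" for s t
      using lip[of "l - s" "l - t"] that by (auto simp: r'_def)
    have "r' 0 \<le> Cl" "C0 \<le> r' l" using 3 ab by (auto simp: C0_def Cl_def clampr_def r'_def)
    from crossing_up[OF cont' lip' l this]
    obtain s1 s2 where "0 \<le> s1 \<and> s1 \<le> s2 \<and> s2 \<le> l \<and> C0 - Cl \<le> s2 - s1 \<and>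
           (\<forall>t. s1 < t \<and> t < s2 \<longrightarrow> Cl < r' t \<and> r' t < C0)" by blast
    hence H: "0 \<le> s1" "s1 \<le> s2" "s2 \<le> l" "C0 - Cl \<le> s2 - s1"
       "\<And>t. s1 < t \<Longrightarrow> t < s2 \<Longrightarrow> Cl < r (l - t) \<and> r (l - t) < C0" by (auto simp: r'_def)
    have "\<forall>t. l - s2 < t \<and> t < l - s1 \<longrightarrow> a < r t \<and> r t < b"
    proof (intro allI impI)
      fix t assume "l - s2 < t \<and> t < l - s1"
      with H(5)[of "l - t"] rng show "a < r t \<and> r t < b" by auto
    qed
    thus ?thesis using 3 H unfolding C0_def[symmetric] Cl_def[symmetric]
      by (intro exI[of _ "l - s2"] exI[of _ "l - s1"]) auto
  qed
qed



definition hf :: "real \<Rightarrow> real \<Rightarrow> real \<Rightarrow> real" where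
  "hf a b s = (b - clampr a b s) / (b - a)"

lemma arclength_dist:
  assumes "arclength_curve \<gamma> l" "0 \<le> s" "s \<le> t" "t \<le> l"
  shows "dist (\<gamma> s) (\<gamma> t) \<le> t - s"
proof -
  let ?I = "{(n, tt). tt (0::nat) = s \<and> tt n = t \<and> (\<forall>i<n. tt i \<le> tt (Suc i))}"
  have mem: "(1::nat, \<lambda>i::nat. if i = 0 then s else t) \<in> ?I" using assms by auto
  have "ennreal (dist (\<gamma> s) (\<gamma> t)) \<le> curve_variation \<gamma> s t"
    unfolding curve_variation_def
    by (rule SUP_upper2[OF mem]) simp
  also have "\<dots> = ennreal (t - s)" using assms unfolding arclength_curve_def by auto
  finally show ?thesis using assms by (auto simp: ennreal_le_iff2)
qed

lemma arclength_lip: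
  assumes "arclength_curve \<gamma> l" "s \<in> {0..l}" "t \<in> {0..l}"
  shows "\<bar>dist (\<gamma> s) x0 - dist (\<gamma> t) x0\<bar> \<le> \<bar>s - t\<bar>"
proof -
  have "dist (\<gamma> s) (\<gamma> t) \<le> \<bar>s - t\<bar>"
  proof (cases "s \<le> t")
    case True thus ?thesis using arclength_dist[OF assms(1), of s t] assms by auto
  next
    case False thus ?thesis using arclength_dist[OF assms(1), of t s] assms by (auto simp: dist_commute)
  qed
  moreover have "\<bar>dist (\<gamma> s) x0 - dist (\<gamma> t) x0\<bar> \<le> dist (\<gamma> s) (\<gamma> t)"
    by (metis abs_le_iff dist_commute dist_triangle2 diff_le_eq minus_diff_eq add.commute)
  ultimately show ?thesis by linarith
qed

lemma arclength_rcont: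
  assumes "arclength_curve \<gamma> l"
  shows "continuous_on {0..l} (\<lambda>t. dist (\<gamma> t) x0)"
  using assms unfolding arclength_curve_def by (auto intro!: continuous_intros)



definition annul :: "'a::metric_space \<Rightarrow> real \<Rightarrow> real \<Rightarrow> 'a set" where
  "annul x0 a b = {x. a < dist x x0 \<and> dist x x0 < b}"

lemma sum_ug:
  fixes x0 :: "'a::metric_space"
  assumes K: "finite K" and ab: "\<And>k. k \<in> K \<Longrightarrow> a k < b k" and c: "\<And>k. k \<in> K \<Longrightarrow> 0 \<le> c k"
    and \<gamma>: "arclength_curve \<gamma> l"
  shows "ennreal \<bar>(\<Sum>k\<in>K. c k * hf (a k) (b k) (dist (\<gamma> 0) x0)) - (\<Sum>k\<in>K. c k * hf (a k) (b k) (dist (\<gamma> l) x0))\<bar>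
     \<le> line_integral (\<lambda>x. ennreal (\<Sum>k\<in>K. c k / (b k - a k) * indicator (annul x0 (a k) (b k)) x)) \<gamma> l"
proof -
  define r where "r = (\<lambda>t. dist (\<gamma> t) x0)"
  have l: "0 \<le> l" using \<gamma> unfolding arclength_curve_def by auto
  have cont: "continuous_on {0..l} r" unfolding r_def by (rule arclength_rcont[OF \<gamma>])
  have lip: "\<And>s t. s \<in> {0..l} \<Longrightarrow> t \<in> {0..l} \<Longrightarrow> \<bar>r s - r t\<bar> \<le> \<bar>s - t\<bar>"
    unfolding r_def by (rule arclength_lip[OF \<gamma>])
  have "\<forall>k\<in>K. \<exists>s1 s2. 0 \<le> s1 \<and> s1 \<le> s2 \<and> s2 \<le> l \<and>
           \<bar>clampr (a k) (b k) (r 0) - clampr (a k) (b k) (r l)\<bar> \<le> s2 - s1 \<and>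
           (\<forall>t. s1 < t \<and> t < s2 \<longrightarrow> a k < r t \<and> r t < b k)"
    using crossing_clamp[OF cont lip l] ab by blast
  then obtain S1 S2 where S: "\<And>k. k \<in> K \<Longrightarrow> 0 \<le> S1 k \<and> S1 k \<le> S2 k \<and> S2 k \<le> l \<and>
           \<bar>clampr (a k) (b k) (r 0) - clampr (a k) (b k) (r l)\<bar> \<le> S2 k - S1 k \<and>
           (\<forall>t. S1 k < t \<and> t < S2 k \<longrightarrow> a k < r t \<and> r t < b k)"
    by metis
  define w where "w k = c k / (b k - a k)" for k
  have w0: "k \<in> K \<Longrightarrow> 0 \<le> w k" for k using ab[of k] c[of k] by (auto simp: w_def)
  have "\<bar>(\<Sum>k\<in>K. c k * hf (a k) (b k) (r 0)) - (\<Sum>k\<in>K. c k * hf (a k) (b k) (r l))\<bar>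
      = \<bar>\<Sum>k\<in>K. c k * (hf (a k) (b k) (r 0) - hf (a k) (b k) (r l))\<bar>"
    by (simp add: sum_subtractf right_diff_distrib)
  also have "\<dots> \<le> (\<Sum>k\<in>K. \<bar>c k * (hf (a k) (b k) (r 0) - hf (a k) (b k) (r l))\<bar>)"
    by (rule sum_abs)
  also have "\<dots> \<le> (\<Sum>k\<in>K. w k * (S2 k - S1 k))"
  proof (rule sum_mono)
    fix k assume k: "k \<in> K"
    have "hf (a k) (b k) (r 0) - hf (a k) (b k) (r l)
        = (clampr (a k) (b k) (r l) - clampr (a k) (b k) (r 0)) / (b k - a k)"
      by (simp add: hf_def diff_divide_distrib)
    hence "\<bar>c k * (hf (a k) (b k) (r 0) - hf (a k) (b k) (r l))\<bar>
       = w k * \<bar>clampr (a k) (b k) (r 0) - clampr (a k) (b k) (r l)\<bar>"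
      using c[OF k] ab[OF k] by (simp add: w_def abs_mult abs_minus_commute)
    also have "\<dots> \<le> w k * (S2 k - S1 k)"
      using S[OF k] w0[OF k] by (intro mult_left_mono) auto
    finally show "\<bar>c k * (hf (a k) (b k) (r 0) - hf (a k) (b k) (r l))\<bar> \<le> w k * (S2 k - S1 k)" .
  qed
  finally have ineq: "\<bar>(\<Sum>k\<in>K. c k * hf (a k) (b k) (r 0)) - (\<Sum>k\<in>K. c k * hf (a k) (b k) (r l))\<bar>
      \<le> (\<Sum>k\<in>K. w k * (S2 k - S1 k))" .
  have "ennreal (\<Sum>k\<in>K. w k * (S2 k - S1 k)) = (\<Sum>k\<in>K. ennreal (w k) * emeasure lborel {S1 k<..<S2 k})"
    using S w0 by (subst sum_ennreal[symmetric]) (auto simp: ennreal_mult intro!: sum.cong)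
  also have "\<dots> = (\<Sum>k\<in>K. \<integral>\<^sup>+ t. ennreal (w k) * indicator {S1 k<..<S2 k} t \<partial>lborel)"
    by (simp add: nn_integral_cmult_indicator)
  also have "\<dots> = (\<integral>\<^sup>+ t. (\<Sum>k\<in>K. ennreal (w k) * indicator {S1 k<..<S2 k} t) \<partial>lborel)"
    by (rule nn_integral_sum[symmetric]) auto
  also have "\<dots> \<le> (\<integral>\<^sup>+ t. ennreal (\<Sum>k\<in>K. w k * indicator (annul x0 (a k) (b k)) (\<gamma> t)) * indicator {0..l} t \<partial>lborel)"
  proof (rule nn_integral_mono)
    fix t
    show "(\<Sum>k\<in>K. ennreal (w k) * indicator {S1 k<..<S2 k} t)
       \<le> ennreal (\<Sum>k\<in>K. w k * indicator (annul x0 (a k) (b k)) (\<gamma> t)) * indicator {0..l} t"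
    proof (cases "t \<in> {0..l}")
      case False
      hence "\<And>k. k \<in> K \<Longrightarrow> t \<notin> {S1 k<..<S2 k}" using S by fastforce
      thus ?thesis using False by simp
    next
      case True
      have "(\<Sum>k\<in>K. ennreal (w k) * indicator {S1 k<..<S2 k} t)
          = ennreal (\<Sum>k\<in>K. w k * indicator {S1 k<..<S2 k} t)"
        using w0 by (subst sum_ennreal[symmetric]) (auto simp: ennreal_mult' indicator_def intro!: sum.cong)
      also have "\<dots> \<le> ennreal (\<Sum>k\<in>K. w k * indicator (annul x0 (a k) (b k)) (\<gamma> t))"
      proof (intro ennreal_leI sum_mono)
        fix k assume k: "k \<in> K"
        have "t \<in> {S1 k<..<S2 k} \<Longrightarrow> \<gamma> t \<in> annul x0 (a k) (b k)"
          using S[OF k] by (auto simp: annul_def r_def)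
        thus "w k * indicator {S1 k<..<S2 k} t \<le> w k * indicator (annul x0 (a k) (b k)) (\<gamma> t)"
          using w0[OF k] by (auto simp: indicator_def)
      qed
      finally show ?thesis using True by simp
    qed
  qed
  also have "\<dots> = line_integral (\<lambda>x. ennreal (\<Sum>k\<in>K. w k * indicator (annul x0 (a k) (b k)) x)) \<gamma> l"
    unfolding line_integral_def by simp
  finally show ?thesis using ineq unfolding r_def w_def
    by (meson ennreal_leI order.trans)
qed



definition rk :: "nat \<Rightarrow> real" where "rk n = 2 powr (- real n)"

lemma rk_pos: "0 < rk n" by (simp add: rk_def)
lemma rk_Suc: "rk (Suc n) = rk n / 2"
  by (simp add: rk_def powr_diff powr_minus divide_simps powr_add)
lemma rk_mono: "m \<le> n \<Longrightarrow> rk n \<le> rk m"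
  by (simp add: rk_def)
lemma rk_zero: "rk 0 = 1" by (simp add: rk_def)

lemma hf_range: "a < b \<Longrightarrow> 0 \<le> hf a b s \<and> hf a b s \<le> 1"
  by (auto simp: hf_def clampr_def divide_simps)
lemma hf_one: "a < b \<Longrightarrow> s \<le> a \<Longrightarrow> hf a b s = 1"
  by (auto simp: hf_def clampr_def divide_simps)
lemma hf_zero: "a < b \<Longrightarrow> b \<le> s \<Longrightarrow> hf a b s = 0"
  by (auto simp: hf_def clampr_def divide_simps)
lemma hf_cont: "continuous_on UNIV (\<lambda>x. hf a b (f x))" if "continuous_on UNIV f"
  unfolding hf_def clampr_def divide_inverse using that by (auto intro!: continuous_intros)

lemma open_annul: "open (annul x0 a b)"
  unfolding annul_def by (intro open_Collect_conj open_Collect_less) (auto intro!: continuous_intros)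

lemma annul_disj:
  assumes "x \<in> annul x0 (rk (Suc k)) (rk k)" "x \<in> annul x0 (rk (Suc k')) (rk k')"
  shows "k = k'"
proof (rule ccontr)
  assume "k \<noteq> k'"
  then consider "Suc k \<le> k'" | "Suc k' \<le> k" by linarith
  thus False
  proof cases
    case 1 thus False using rk_mono[OF 1] assms by (auto simp: annul_def)
  next
    case 2 thus False using rk_mono[OF 2] assms by (auto simp: annul_def)
  qed
qed

lemma energy_identity:
  fixes R m p S :: real
  assumes "0 < R" "0 < m" "1 < p" "0 < S"
  defines "v \<equiv> (R powr p / m) powr (1 / (p - 1))"
  shows "((2 * v / (S * R)) powr p) * m = 2 powr p * S powr (- p) * v"
proof -
  have v0: "0 < v" using assms by (simp add: v_def)
  have "v powr (p - 1) = R powr p / m"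
    using assms by (simp add: v_def powr_powr)
  hence vp: "v powr p = v * (R powr p / m)"
    using v0 by (metis powr_add powr_one diff_add_cancel add.commute less_imp_le)
  have "(2 * v / (S * R)) powr p = 2 powr p * v powr p * S powr (-p) * R powr (-p)"
    using assms v0 by (simp add: powr_divide powr_mult powr_minus divide_simps)
  also have "\<dots> = 2 powr p * S powr (-p) * v * (R powr p * R powr (-p)) / m"
    by (simp add: vp)
  also have "R powr p * R powr (-p) = 1" using assms by (simp add: powr_minus)
  finally show ?thesis using assms by simp
qed



definition vv :: "'a::metric_space measure \<Rightarrow> real \<Rightarrow> 'a \<Rightarrow> nat \<Rightarrow> real" where
  "vv M p x0 n = (2 powr (- real n * p) / measure M (ball x0 (2 powr (- real n)))) powr (1 / (p - 1))"

lemma meas_borel: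
  assumes "space M = UNIV" "sets (borel::'a::topological_space measure) \<subseteq> sets M"
    and "f \<in> borel_measurable (borel :: 'a measure)"
  shows "f \<in> borel_measurable M"
  using assms unfolding measurable_def by auto

lemma p_modulus_empty: "p_modulus M p {} = 0"
proof -
  have "p_modulus M p {} \<le> (\<integral>\<^sup>+ x. epow p ((\<lambda>_. 0) x) \<partial>M)"
    unfolding p_modulus_def by (rule INF_lower) auto
  also have "\<dots> = 0" by (simp add: epow_def)
  finally show ?thesis by simp
qed

lemma sum_single:
  assumes "finite K"
  shows "(\<Sum>k\<in>K. f k * (if k = k' then 1 else (0::real))) = (if k' \<in> K then f k' else 0)"
proof -
  have "(\<Sum>k\<in>K. f k * (if k = k' then 1 else (0::real))) = (\<Sum>k\<in>K. if k = k' then f k else 0)"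
    by (rule sum.cong) auto
  also have "\<dots> = (if k' \<in> K then f k' else 0)" using assms by (simp add: sum.delta)
  finally show ?thesis .
qed

lemma sum_ennreal_ind:
  assumes "\<And>k. k \<in> K \<Longrightarrow> 0 \<le> f k"
  shows "(\<Sum>k\<in>K. ennreal (f k) * indicator (A k) x) = ennreal (\<Sum>k\<in>K. f k * indicator (A k) x)"
proof -
  have "(\<Sum>k\<in>K. ennreal (f k) * indicator (A k) x) = (\<Sum>k\<in>K. ennreal (f k * indicator (A k) x))"
    by (rule sum.cong) (auto simp: indicator_def)
  also have "\<dots> = ennreal (\<Sum>k\<in>K. f k * indicator (A k) x)"
    by (rule sum_ennreal) (simp add: assms)
  finally show ?thesis .
qed

lemma powr_helper: "0 < (S::real) \<Longrightarrow> c * S powr (-p) * S = c * S powr (1 - p)"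
proof -
  assume S: "0 < S"
  have "S powr (-p) * S = S powr (-p) * S powr 1" using S by simp
  also have "\<dots> = S powr (-p + 1)" by (simp only: powr_add)
  finally show ?thesis by (simp add: mult.assoc)
qed

lemma nn_integral_sum_ind:
  fixes M :: "'a measure" assumes K: "finite K" and A: "\<And>k. A k \<in> sets M" shows
  "(\<integral>\<^sup>+ x. (\<Sum>k\<in>K. ennreal (f k) * indicator (A k) x) \<partial>M) = (\<Sum>k\<in>K. ennreal (f k) * emeasure M (A k))"
proof -
  have "(\<integral>\<^sup>+ x. (\<Sum>k\<in>K. ennreal (f k) * indicator (A k) x) \<partial>M) = (\<Sum>k\<in>K. \<integral>\<^sup>+ x. ennreal (f k) * indicator (A k) x \<partial>M)"
    by (rule nn_integral_sum) (intro borel_measurable_times_ennreal borel_measurable_const borel_measurable_indicator A)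
  also have "\<dots> = (\<Sum>k\<in>K. ennreal (f k) * emeasure M (A k))"
    by (rule sum.cong) (simp_all add: nn_integral_cmult_indicator A)
  finally show ?thesis .
qed

lemma construction:
  fixes M :: "'a::metric_space measure" and x0 :: 'a and j N :: nat
  assumes space: "space M = UNIV" and borel_sets: "sets (borel::'a measure) \<subseteq> sets M"
    and balls: "\<And>x r. 0 < r \<Longrightarrow> 0 < emeasure M (ball x r) \<and> emeasure M (ball x r) < \<infinity>"
    and p: "1 < p"
    and S_def: "S = (\<Sum>k\<in>{j..<N}. vv M p x0 k)"
    and Spos: "0 < S"
  shows "\<exists>u g. u \<in> newtonian M p \<and> 1 \<le> u x0 \<and> (\<forall>x. rk j \<le> dist x x0 \<longrightarrow> u x = 0)
      \<and> p_weak_upper_gradient M p u g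
      \<and> (\<integral>\<^sup>+ x. epow p (g x) \<partial>M) \<le> ennreal (2 powr p * S powr (1 - p))
      \<and> newton_norm_p M p u \<le> emeasure M (ball x0 (rk j)) + ennreal (2 powr p * S powr (1 - p))"
proof -
  define K where "K = {j..<N}"
  have K: "finite K" by (simp add: K_def)
  define m where "m k = measure M (ball x0 (rk k))" for k
  have em: "emeasure M (ball x0 (rk k)) = ennreal (m k)" for k
    using balls[OF rk_pos[of k], of x0] unfolding m_def by (simp add: emeasure_eq_ennreal_measure less_top)
  have mpos: "0 < m k" for k
    using balls[OF rk_pos[of k], of x0] em[of k] by (simp add: ennreal_less_iff m_def measure_nonneg)
  have vv_eq: "vv M p x0 k = (rk k powr p / m k) powr (1 / (p - 1))" for k
    unfolding vv_def m_def rk_def using p by (simp add: powr_powr mult.commute)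
  have v0: "0 \<le> vv M p x0 k" for k by (simp add: vv_def)
  define a where "a k = rk (Suc k)" for k
  define b where "b k = rk k" for k
  have ab: "a k < b k" for k by (simp add: a_def b_def rk_Suc rk_pos)
  define c where "c k = vv M p x0 k / S" for k
  have c0: "0 \<le> c k" for k using Spos v0 by (simp add: c_def)
  have csum: "(\<Sum>k\<in>K. c k) = 1" using Spos by (simp add: c_def K_def S_def sum_divide_distrib[symmetric])
  define u where "u x = (\<Sum>k\<in>K. c k * hf (a k) (b k) (dist x x0))" for x
  define G where "G x = (\<Sum>k\<in>K. c k / (b k - a k) * indicator (annul x0 (a k) (b k)) x)" for x
  define g where "g x = ennreal (G x)" for x
  define w where "w k = c k / (b k - a k)" for k
  have w0: "0 \<le> w k" for k using c0 ab[of k] by (simp add: w_def)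
  have G0: "0 \<le> G x" for x unfolding G_def using c0 ab
    by (intro sum_nonneg mult_nonneg_nonneg divide_nonneg_pos) (auto simp: less_imp_le)
  have u_cont: "continuous_on UNIV u" unfolding u_def
    by (intro continuous_intros hf_cont)
  have u_meas: "u \<in> borel_measurable M"
    by (rule meas_borel[OF space borel_sets]) (rule borel_measurable_continuous_onI[OF u_cont])
  have ann_sets: "annul x0 (a k) (b k) \<in> sets M" for k
    using borel_sets borel_open[OF open_annul] by blast
  have G_meas: "G \<in> borel_measurable borel" unfolding G_def
    by (intro borel_measurable_sum borel_measurable_times borel_measurable_const borel_measurable_indicator borel_open[OF open_annul])
  have g_meas: "g \<in> borel_measurable borel" unfolding g_def using G_meas by simp
  have ug: "p_weak_upper_gradient M p u g"
    unfolding p_weak_upper_gradient_def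
  proof (intro conjI exI[of _ "{}"])
    show "g \<in> borel_measurable borel" by (rule g_meas)
    show "p_modulus M p {} = 0" by (rule p_modulus_empty)
    show "\<forall>\<gamma> l. arclength_curve \<gamma> l \<and> (\<gamma>, l) \<notin> {} \<longrightarrow> ennreal \<bar>u (\<gamma> 0) - u (\<gamma> l)\<bar> \<le> line_integral g \<gamma> l"
    proof (intro allI impI)
      fix \<gamma> :: "real \<Rightarrow> 'a" and l :: real assume "arclength_curve \<gamma> l \<and> (\<gamma>, l) \<notin> {}"
      hence "arclength_curve \<gamma> l" by simp
      from sum_ug[where a=a and b=b and c=c, OF K ab c0 this]
      show "ennreal \<bar>u (\<gamma> 0) - u (\<gamma> l)\<bar> \<le> line_integral g \<gamma> l"
        unfolding u_def g_def G_def .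
    qed
  qed
  have ptw: "epow p (g x) = ennreal (\<Sum>k\<in>K. w k powr p * indicator (annul x0 (a k) (b k)) x)" for x
  proof -
    have "epow p (g x) = ennreal (G x powr p)" using G0 by (simp add: epow_def g_def)
    also have "G x powr p = (\<Sum>k\<in>K. w k powr p * indicator (annul x0 (a k) (b k)) x)"
    proof (cases "\<exists>k'. x \<in> annul x0 (a k') (b k')")
      case True
      then obtain k' where k': "x \<in> annul x0 (a k') (b k')" by blast
      have ind: "indicator (annul x0 (a k) (b k)) x = (if k = k' then 1 else (0::real))" for k
      proof (cases "k = k'")
        case True thus ?thesis using k' by simp
      next
        case False
        hence "x \<notin> annul x0 (a k) (b k)" using annul_disj[of x x0 k k'] k' unfolding a_def b_def by blast
        thus ?thesis using False by simp
      qed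
      have G1: "G x = (if k' \<in> K then w k' else 0)"
        unfolding G_def ind w_def[symmetric] using sum_single[OF K] by simp
      have G2: "(\<Sum>k\<in>K. w k powr p * indicator (annul x0 (a k) (b k)) x) = (if k' \<in> K then w k' powr p else 0)"
        unfolding ind using sum_single[OF K] by simp
      show ?thesis unfolding G1 G2 using p by simp
    next
      case False
      hence "indicator (annul x0 (a k) (b k)) x = (0::real)" for k by auto
      thus ?thesis unfolding G_def using p by simp
    qed
    finally show ?thesis .
  qed
  have en_k: "w k powr p * m k = 2 powr p * S powr (-p) * vv M p x0 k" for k
  proof -
    have wk: "w k = 2 * vv M p x0 k / (S * rk k)"
    proof -
      have bma: "b k - a k = rk k / 2" by (simp add: a_def b_def rk_Suc)
      have "w k = (vv M p x0 k / S) / (rk k / 2)" by (simp only: w_def c_def bma)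
      thus ?thesis by (simp add: divide_divide_eq_left divide_divide_eq_right mult.commute)
    qed
    have E: "((2 * vv M p x0 k / (S * rk k)) powr p) * m k = 2 powr p * S powr (- p) * vv M p x0 k"
      unfolding vv_eq by (rule energy_identity[OF rk_pos mpos p Spos])
    show ?thesis by (simp only: wk E)
  qed
  have energy: "(\<integral>\<^sup>+ x. epow p (g x) \<partial>M) \<le> ennreal (2 powr p * S powr (1 - p))"
  proof -
    have "(\<integral>\<^sup>+ x. epow p (g x) \<partial>M) = (\<integral>\<^sup>+ x. (\<Sum>k\<in>K. ennreal (w k powr p) * indicator (annul x0 (a k) (b k)) x) \<partial>M)"
      unfolding ptw by (rule nn_integral_cong, rule sum_ennreal_ind[symmetric]) simp
    also have "\<dots> = (\<Sum>k\<in>K. ennreal (w k powr p) * emeasure M (annul x0 (a k) (b k)))"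
      by (rule nn_integral_sum_ind[OF K ann_sets])
    also have "\<dots> \<le> (\<Sum>k\<in>K. ennreal (w k powr p) * ennreal (m k))"
    proof (intro sum_mono mult_left_mono)
      fix k
      have "annul x0 (a k) (b k) \<subseteq> ball x0 (rk k)" by (auto simp: annul_def b_def dist_commute)
      hence "emeasure M (annul x0 (a k) (b k)) \<le> emeasure M (ball x0 (rk k))"
        using borel_sets by (intro emeasure_mono) auto
      thus "emeasure M (annul x0 (a k) (b k)) \<le> ennreal (m k)" by (simp add: em)
    qed auto
    also have "\<dots> = ennreal (\<Sum>k\<in>K. 2 powr p * S powr (-p) * vv M p x0 k)"
    proof -
      have "(\<Sum>k\<in>K. ennreal (w k powr p) * ennreal (m k)) = (\<Sum>k\<in>K. ennreal (2 powr p * S powr (-p) * vv M p x0 k))"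
      proof (rule sum.cong)
        fix k
        have "ennreal (w k powr p) * ennreal (m k) = ennreal (w k powr p * m k)"
          using mpos[of k] by (simp add: ennreal_mult'')
        thus "ennreal (w k powr p) * ennreal (m k) = ennreal (2 powr p * S powr (-p) * vv M p x0 k)"
          by (simp only: en_k)
      qed simp
      also have "\<dots> = ennreal (\<Sum>k\<in>K. 2 powr p * S powr (-p) * vv M p x0 k)"
        by (rule sum_ennreal) (simp add: v0)
      finally show ?thesis .
    qed
    also have "(\<Sum>k\<in>K. 2 powr p * S powr (-p) * vv M p x0 k) = 2 powr p * S powr (-p) * S"
      by (simp add: sum_distrib_left[symmetric] S_def K_def)
    also have "\<dots> = 2 powr p * S powr (1 - p)"
      using Spos by (rule powr_helper)
    finally show ?thesis .
  qed
  have u_le: "\<bar>u x\<bar> \<le> 1" for x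
  proof -
    have "0 \<le> u x" unfolding u_def using c0 hf_range[OF ab] by (auto intro!: sum_nonneg)
    moreover have "u x \<le> (\<Sum>k\<in>K. c k)" unfolding u_def
      using c0 hf_range[OF ab] by (auto intro!: sum_mono mult_right_le_one_le)
    ultimately show ?thesis using csum by simp
  qed
  have u_x0: "u x0 = 1" unfolding u_def using hf_one[OF ab] rk_pos csum
    by (simp add: a_def less_imp_le)
  have u_out: "u x = 0" if "rk j \<le> dist x x0" for x
  proof -
    have "hf (a k) (b k) (dist x x0) = 0" if "k \<in> K" for k
      using that \<open>rk j \<le> dist x x0\<close> rk_mono[of j k] by (intro hf_zero[OF ab]) (auto simp: K_def b_def)
    thus ?thesis by (simp add: u_def)
  qed
  have Lp: "(\<integral>\<^sup>+ x. ennreal (\<bar>u x\<bar> powr p) \<partial>M) \<le> emeasure M (ball x0 (rk j))"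
  proof -
    have "(\<integral>\<^sup>+ x. ennreal (\<bar>u x\<bar> powr p) \<partial>M) \<le> (\<integral>\<^sup>+ x. indicator (ball x0 (rk j)) x \<partial>M)"
    proof (rule nn_integral_mono)
      fix x
      show "ennreal (\<bar>u x\<bar> powr p) \<le> indicator (ball x0 (rk j)) x"
      proof (cases "x \<in> ball x0 (rk j)")
        case True
        have "\<bar>u x\<bar> powr p \<le> 1" using u_le[of x] p by (simp add: powr_le1)
        thus ?thesis using True by simp
      next
        case False
        hence "u x = 0" using u_out by (simp add: dist_commute)
        thus ?thesis using False by simp
      qed
    qed
    also have "\<dots> = emeasure M (ball x0 (rk j))"
      using borel_sets by (subst nn_integral_indicator) auto
    finally show ?thesis .
  qed
  have norm: "newton_norm_p M p u \<le> emeasure M (ball x0 (rk j)) + ennreal (2 powr p * S powr (1 - p))"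
  proof -
    have "(INF g \<in> {g. p_weak_upper_gradient M p u g}. \<integral>\<^sup>+ x. epow p (g x) \<partial>M) \<le> (\<integral>\<^sup>+ x. epow p (g x) \<partial>M)"
      by (rule INF_lower) (simp add: ug)
    thus ?thesis unfolding newton_norm_p_def using Lp energy by (intro add_mono) auto
  qed
  have newt: "u \<in> newtonian M p"
    unfolding newtonian_def using u_meas norm balls[OF rk_pos[of j], of x0]
    by (auto simp: top.not_eq_extremum intro: le_less_trans)
  show ?thesis
    using newt u_x0 u_out ug energy norm by (intro exI[of _ u] exI[of _ g]) auto
qed



lemma rk_pow: "rk n = (1/2) ^ n"
  by (simp add: rk_def powr_minus powr_realpow power_one_over inverse_eq_divide)

lemma rk_lim: "rk \<longlonglongrightarrow> 0"
  unfolding rk_pow[abs_def] by (rule LIMSEQ_power_zero) simp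

lemma rk_small: "0 < \<rho> \<Longrightarrow> \<exists>n. rk n < \<rho>"
  using order_tendstoD(2)[OF rk_lim] by (metis eventually_sequentially order_refl)

lemma partial_unbounded:
  fixes v :: "nat \<Rightarrow> real"
  assumes nonneg: "\<And>k. 0 \<le> v k" and inf: "(\<Sum>k. ennreal (v (k + k0))) = \<infinity>"
  shows "\<exists>N. B \<le> (\<Sum>k\<in>{j..<N}. v k)"
proof (rule ccontr)
  assume "\<not> ?thesis"
  hence lt: "\<And>N. (\<Sum>k\<in>{j..<N}. v k) < B" by (simp add: not_le)
  have bnd: "(\<Sum>k<n. ennreal (v (k + k0))) \<le> ennreal ((\<Sum>k\<in>{0..<j}. v k) + B)" for n
  proof -
    have E: "(\<Sum>k<n. ennreal (v (k + k0))) = ennreal (\<Sum>k<n. v (k + k0))"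
      using nonneg by (simp add: sum_ennreal)
    have "(\<Sum>k<n. v (k + k0)) = (\<Sum>k\<in>{0+k0..<n+k0}. v k)"
      using sum.shift_bounds_nat_ivl[of v 0 k0 n] by (simp add: atLeast0LessThan)
    also have "\<dots> \<le> (\<Sum>k\<in>{0..<j+(n+k0)}. v k)"
      using nonneg by (intro sum_mono2) auto
    also have "\<dots> = (\<Sum>k\<in>{0..<j}. v k) + (\<Sum>k\<in>{j..<j+(n+k0)}. v k)"
      by (rule sum.atLeastLessThan_concat[symmetric]) auto
    also have "\<dots> \<le> (\<Sum>k\<in>{0..<j}. v k) + B"
      using lt[of "j+(n+k0)"] by simp
    finally show ?thesis unfolding E by (rule ennreal_leI)
  qed
  have "(\<Sum>k. ennreal (v (k + k0))) \<le> ennreal ((\<Sum>k\<in>{0..<j}. v k) + B)"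
    by (rule suminf_le_const[OF summableI bnd])
  thus False using inf by (simp add: top_unique)
qed

lemma small_energy:
  fixes C S \<epsilon> p :: real
  assumes p: "1 < p" and e: "0 < \<epsilon>" and C: "0 < C" and S: "(C / \<epsilon>) powr (1 / (p - 1)) \<le> S"
  shows "C * S powr (1 - p) \<le> \<epsilon>"
proof -
  have S0: "0 < S" using S C e by (smt (verit) divide_pos_pos powr_gt_zero)
  have "((C / \<epsilon>) powr (1 / (p - 1))) powr (p - 1) \<le> S powr (p - 1)"
    using S p C e by (intro powr_mono2) auto
  hence ge: "C / \<epsilon> \<le> S powr (p - 1)" using p C e by (simp add: powr_powr)
  have "S powr (1 - p) = inverse (S powr (p - 1))"
    by (simp add: powr_minus[symmetric])
  hence "C * S powr (1 - p) = C / S powr (p - 1)" by (simp add: divide_inverse)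
  also have "\<dots> \<le> C / (C / \<epsilon>)"
    using ge C e S0 by (intro divide_left_mono) (auto intro!: mult_pos_pos)
  also have "\<dots> = \<epsilon>" using C by simp
  finally show ?thesis .
qed



lemma vv_eq2:
  assumes "1 < p"
  shows "vv M p x0 n = (rk n powr p / measure M (ball x0 (rk n))) powr (1 / (p - 1))"
  unfolding vv_def rk_def using assms by (simp add: powr_powr mult.commute)

lemma point_null:
  fixes M :: "'a::metric_space measure" and x0 :: 'a
  assumes borel_sets: "sets (borel::'a measure) \<subseteq> sets M"
    and balls: "\<And>x r. 0 < r \<Longrightarrow> 0 < emeasure M (ball x r) \<and> emeasure M (ball x r) < \<infinity>"
    and p: "1 < p"
    and inf: "(\<Sum>k. ennreal (vv M p x0 (k + k0))) = \<infinity>"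
  shows "emeasure M {x0} = 0"
proof (rule ccontr)
  assume nz: "emeasure M {x0} \<noteq> 0"
  have sing: "{x0} \<in> sets M" using borel_sets by auto
  have ballM: "ball x0 r \<in> sets M" for r using borel_sets by auto
  have "emeasure M {x0} \<le> emeasure M (ball x0 1)"
    using ballM by (intro emeasure_mono) auto
  hence fin: "emeasure M {x0} < \<infinity>" using balls[of 1 x0] by (meson le_less_trans zero_less_one)
  define m0 where "m0 = measure M {x0}"
  have em0: "emeasure M {x0} = ennreal m0" using fin by (simp add: m0_def emeasure_eq_ennreal_measure)
  have m0pos: "0 < m0" using nz em0 by (simp add: m0_def measure_nonneg order.not_eq_order_implies_strict)
  define e where "e = 1 / (p - 1)"
  have e0: "0 < e" using p by (simp add: e_def)
  define q where "q = 2 powr (- (p * e))"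
  have q0: "0 < q" by (simp add: q_def)
  have "-(p * e) < 0" using p e0 by (simp add: mult_pos_pos)
  hence "2 powr (-(p * e)) < 2 powr 0" by (intro powr_less_mono) auto
  hence q1: "q < 1" by (simp add: q_def)
  define C where "C = m0 powr (- e)"
  have mge: "m0 \<le> measure M (ball x0 (rk n))" for n
  proof -
    have fb: "emeasure M (ball x0 (rk n)) < \<infinity>" using balls[OF rk_pos] by blast
    have "ennreal m0 \<le> emeasure M (ball x0 (rk n))"
      unfolding em0[symmetric] using ballM rk_pos[of n] by (intro emeasure_mono) auto
    thus ?thesis using fb by (simp add: emeasure_eq_ennreal_measure ennreal_le_iff measure_nonneg)
  qed
  have vle: "vv M p x0 n \<le> C * q ^ n" for n
  proof -
    have "vv M p x0 n \<le> (rk n powr p / m0) powr e"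
      unfolding vv_eq2[OF p] e_def[symmetric] using e0 m0pos mge[of n]
      by (intro powr_mono2 divide_left_mono) (auto intro!: mult_pos_pos)
    also have "\<dots> = rk n powr (p * e) / m0 powr e"
      using m0pos by (simp add: powr_divide powr_powr rk_pos less_imp_le)
    also have "rk n powr (p * e) = q ^ n"
      unfolding rk_def q_def by (simp add: powr_powr powr_realpow[symmetric] mult.commute)
    finally show ?thesis by (simp add: C_def powr_minus divide_inverse mult.commute)
  qed
  have summ: "summable (\<lambda>k. C * q ^ (k + k0))"
  proof -
    have "summable (\<lambda>k. q ^ k)" by (rule summable_geometric) (use q0 q1 in simp)
    hence "summable (\<lambda>k. (C * q ^ k0) * q ^ k)" by (rule summable_mult)
    thus ?thesis by (simp add: power_add mult_ac)
  qed
  have "(\<Sum>k. ennreal (vv M p x0 (k + k0))) \<le> (\<Sum>k. ennreal (C * q ^ (k + k0)))"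
    by (intro suminf_le summableI ennreal_leI vle)
  also have "\<dots> = ennreal (\<Sum>k. C * q ^ (k + k0))"
    using summ q0 by (intro suminf_ennreal2) (auto simp: C_def)
  finally show False using inf by (simp add: top_unique)
qed

lemma ball_small:
  fixes M :: "'a::metric_space measure" and x0 :: 'a
  assumes borel_sets: "sets (borel::'a measure) \<subseteq> sets M"
    and balls: "\<And>x r. 0 < r \<Longrightarrow> 0 < emeasure M (ball x r) \<and> emeasure M (ball x r) < \<infinity>"
    and z: "emeasure M {x0} = 0"
  shows "(\<lambda>j. emeasure M (ball x0 (rk j))) \<longlonglongrightarrow> 0"
proof -
  have ballM: "ball x0 r \<in> sets M" for r using borel_sets by auto
  have dec: "decseq (\<lambda>j. ball x0 (rk j))"
    by (rule decseq_SucI) (simp add: subset_ball rk_Suc rk_pos less_imp_le)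
  have int: "(\<Inter>j. ball x0 (rk j)) = {x0}"
  proof (intro equalityI subsetI)
    fix x assume x: "x \<in> (\<Inter>j. ball x0 (rk j))"
    show "x \<in> {x0}"
    proof (rule ccontr)
      assume "x \<notin> {x0}"
      hence "0 < dist x0 x" by simp
      then obtain n where "rk n < dist x0 x" using rk_small by blast
      thus False using x by (meson INT_D UNIV_I less_asym mem_ball)
    qed
  qed (auto simp: rk_pos)
  have "(\<lambda>j. emeasure M (ball x0 (rk j))) \<longlonglongrightarrow> emeasure M (\<Inter>j. ball x0 (rk j))"
    using ballM balls[OF rk_pos] by (intro Lim_emeasure_decseq dec) (auto simp: less_top)
  thus ?thesis using int z by simp
qed



lemma int_identity:
  fixes R m p :: real
  assumes R: "0 < R" and m: "0 < m" and p: "1 < p"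
  shows "((2 * R) / m) powr (1 / (p - 1)) * R = 2 powr (1 / (p - 1)) * (R powr p / m) powr (1 / (p - 1))"
proof -
  define e where "e = 1 / (p - 1)"
  have pe: "p * e = e + 1" using p by (simp add: e_def field_simps)
  have "(R powr p / m) powr e = R powr (p * e) / m powr e"
    using R m by (simp add: powr_divide powr_powr)
  also have "R powr (p * e) = R powr e * R" unfolding pe using R by (simp add: powr_add)
  finally have A: "(R powr p / m) powr e = R powr e * R / m powr e" .
  have B: "((2 * R) / m) powr e = 2 powr e * R powr e / m powr e"
    using R m by (simp add: powr_divide powr_mult)
  show ?thesis unfolding e_def[symmetric] A B by simp
qed

lemma ball_meas_pos:
  assumes balls: "\<And>x r. 0 < r \<Longrightarrow> 0 < emeasure M (ball x r) \<and> emeasure M (ball x r) < \<infinity>"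
    and "0 < r"
  shows "0 < measure M (ball x0 r)"
  using balls[OF assms(2), of x0]
  by (simp add: emeasure_eq_ennreal_measure less_top ennreal_less_iff measure_nonneg)
    (metis emeasure_eq_ennreal_measure ennreal_0 less_top not_gr_zero order_less_irrefl zero_less_measure_iff)

lemma ball_meas_mono:
  fixes M :: "'a::metric_space measure"
  assumes borel_sets: "sets (borel::'a measure) \<subseteq> sets M"
    and balls: "\<And>x r. 0 < r \<Longrightarrow> 0 < emeasure M (ball x r) \<and> emeasure M (ball x r) < \<infinity>"
    and "0 < r" "r \<le> r'"
  shows "measure M (ball x0 r) \<le> measure M (ball x0 r')"
proof -
  have "0 < r'" using assms by linarith
  hence fb: "emeasure M (ball x0 r') \<noteq> \<infinity>" using balls[of r' x0] by (simp add: less_top)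
  show ?thesis
    using borel_sets assms fb by (intro measure_mono_fmeasurable) (auto simp: fmeasurable_def less_top subset_ball)
qed

lemma sum_single1: "(\<Sum>i\<in>{k::nat}. g i) = (g k :: ennreal)" by simp

lemma int_to_disc:
  fixes M :: "'a::metric_space measure" and x0 :: 'a
  assumes borel_sets: "sets (borel::'a measure) \<subseteq> sets M"
    and balls: "\<And>x r. 0 < r \<Longrightarrow> 0 < emeasure M (ball x r) \<and> emeasure M (ball x r) < \<infinity>"
    and p: "1 < p" and \<delta>: "0 < \<delta>"
    and I: "(\<integral>\<^sup>+ \<rho> \<in> {0<..<\<delta>}. ennreal ((\<rho> / measure M (ball x0 \<rho>)) powr (1 / (p - 1))) \<partial>lborel) = \<infinity>"
  shows "(\<Sum>k. ennreal (vv M p x0 (k + 1))) = \<infinity>"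
proof (rule ccontr)
  assume fin: "(\<Sum>k. ennreal (vv M p x0 (k + 1))) \<noteq> \<infinity>"
  define e where "e = 1 / (p - 1)"
  have e0: "0 < e" using p by (simp add: e_def)
  define mr where "mr r = measure M (ball x0 r)" for r
  have mpos: "0 < r \<Longrightarrow> 0 < mr r" for r unfolding mr_def by (rule ball_meas_pos[OF balls])
  have mmono: "0 < r \<Longrightarrow> r \<le> r' \<Longrightarrow> mr r \<le> mr r'" for r r'
    unfolding mr_def by (rule ball_meas_mono[OF borel_sets balls])
  define f where "f \<rho> = (\<rho> / mr \<rho>) powr e" for \<rho>
  define E where "E k = (rk k / mr (rk (Suc k))) powr e" for k
  define D where "D = (\<delta> / mr 1) powr e"
  define F where "F \<rho> = (\<Sum>k. ennreal (E k) * indicator {rk (Suc k)<..rk k} \<rho>) + ennreal D * indicator {1<..<\<delta>} \<rho>" for \<rho>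
  have ptw: "ennreal (f \<rho>) * indicator {0<..<\<delta>} \<rho> \<le> F \<rho>" for \<rho>
  proof (cases "\<rho> \<in> {0<..<\<delta>}")
    case False thus ?thesis by simp
  next
    case True
    hence r0: "0 < \<rho>" "\<rho> < \<delta>" by auto
    show ?thesis
    proof (cases "\<rho> \<le> 1")
      case True
      obtain n where n: "rk n < \<rho>" using rk_small[OF r0(1)] by blast
      define k where "k = (LEAST k. rk (Suc k) < \<rho>)"
      have ex: "rk (Suc n) < \<rho>" using n rk_mono[of n "Suc n"] by simp
      have k1: "rk (Suc k) < \<rho>" unfolding k_def by (rule LeastI[of _ n]) (rule ex)
      have k2: "\<rho> \<le> rk k"
      proof (cases k)
        case 0 thus ?thesis using True by (simp add: rk_zero)
      next
        case (Suc k')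
        have "\<not> rk (Suc k') < \<rho>" using not_less_Least[of k' "\<lambda>k. rk (Suc k) < \<rho>"] Suc unfolding k_def by simp
        thus ?thesis using Suc by simp
      qed
      have "f \<rho> \<le> E k"
        unfolding f_def E_def
        using r0 k1 k2 e0 mpos[OF rk_pos[of "Suc k"]] mmono[OF rk_pos[of "Suc k"], of \<rho>] mpos[OF r0(1)]
        by (intro powr_mono2 frac_le) (auto simp: less_imp_le)
      hence "ennreal (f \<rho>) \<le> ennreal (E k) * indicator {rk (Suc k)<..rk k} \<rho>"
        using k1 k2 by (simp add: ennreal_leI)
      also have "\<dots> = (\<Sum>i\<in>{k}. ennreal (E i) * indicator {rk (Suc i)<..rk i} \<rho>)"
        using sum_single1[where k=k and g="\<lambda>i. ennreal (E i) * indicator {rk (Suc i)<..rk i} \<rho>"] by (rule sym)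
      also have "\<dots> \<le> (\<Sum>i. ennreal (E i) * indicator {rk (Suc i)<..rk i} \<rho>)"
        by (rule sum_le_suminf) (auto intro: summableI)
      also have "\<dots> \<le> F \<rho>" unfolding F_def by (rule add_increasing2) auto
      finally show ?thesis using \<open>\<rho> \<in> {0<..<\<delta>}\<close> by simp
    next
      case False
      have "f \<rho> \<le> D"
        unfolding f_def D_def
        using r0 False e0 mpos[of 1] mmono[of 1 \<rho>] mpos[OF r0(1)]
        by (intro powr_mono2 frac_le) (auto simp: less_imp_le)
      hence "ennreal (f \<rho>) \<le> ennreal D * indicator {1<..<\<delta>} \<rho>"
        using False r0 by (simp add: ennreal_leI)
      also have "\<dots> \<le> F \<rho>" unfolding F_def by (rule add_increasing) auto
      finally show ?thesis using \<open>\<rho> \<in> {0<..<\<delta>}\<close> by simp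
    qed
  qed
  have "\<infinity> = (\<integral>\<^sup>+ \<rho>. ennreal (f \<rho>) * indicator {0<..<\<delta>} \<rho> \<partial>lborel)"
    using I by (simp add: f_def mr_def e_def)
  also have "\<dots> \<le> (\<integral>\<^sup>+ \<rho>. F \<rho> \<partial>lborel)" by (rule nn_integral_mono) (rule ptw)
  also have "\<dots> = (\<integral>\<^sup>+ \<rho>. (\<Sum>k. ennreal (E k) * indicator {rk (Suc k)<..rk k} \<rho>) \<partial>lborel)
                  + (\<integral>\<^sup>+ \<rho>. ennreal D * indicator {1<..<\<delta>} \<rho> \<partial>lborel)"
    unfolding F_def by (rule nn_integral_add) auto
  also have "(\<integral>\<^sup>+ \<rho>. (\<Sum>k. ennreal (E k) * indicator {rk (Suc k)<..rk k} \<rho>) \<partial>lborel)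
        = (\<Sum>k. \<integral>\<^sup>+ \<rho>. ennreal (E k) * indicator {rk (Suc k)<..rk k} \<rho> \<partial>lborel)"
    by (rule nn_integral_suminf) auto
  also have "\<dots> = (\<Sum>k. ennreal (E k) * ennreal (rk (Suc k)))"
    by (rule suminf_cong) (simp add: nn_integral_cmult_indicator rk_Suc rk_pos less_imp_le)
  also have "\<dots> = (\<Sum>k. ennreal (2 powr e) * ennreal (vv M p x0 (k + 1)))"
  proof (rule suminf_cong)
    fix k
    have rkk: "rk k = 2 * rk (Suc k)" by (simp add: rk_Suc)
    have "E k * rk (Suc k) = 2 powr e * vv M p x0 (k + 1)"
      unfolding E_def rkk vv_eq2[OF p] e_def mr_def
      using int_identity[OF rk_pos mpos[OF rk_pos] p, of "Suc k" "Suc k"] by (simp add: mr_def)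
    thus "ennreal (E k) * ennreal (rk (Suc k)) = ennreal (2 powr e) * ennreal (vv M p x0 (k + 1))"
      by (metis E_def ennreal_mult powr_ge_zero rk_pos less_imp_le vv_def)
  qed
  also have "\<dots> = ennreal (2 powr e) * (\<Sum>k. ennreal (vv M p x0 (k + 1)))"
    by (rule ennreal_suminf_cmult)
  also have "(\<integral>\<^sup>+ \<rho>. ennreal D * indicator {1<..<\<delta>} \<rho> \<partial>lborel) = ennreal D * emeasure lborel {1<..<\<delta>}"
    by (rule nn_integral_cmult_indicator) simp
  also have "emeasure lborel {1<..<\<delta>} \<le> emeasure lborel {0..\<delta>}"
    by (rule emeasure_mono) auto
  finally have A: "\<infinity> \<le> ennreal (2 powr e) * (\<Sum>k. ennreal (vv M p x0 (k + 1))) + ennreal D * emeasure lborel {0..\<delta>}"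
    by (auto simp: mult_left_mono add_left_mono)
  have B: "ennreal (2 powr e) * (\<Sum>k. ennreal (vv M p x0 (k + 1))) + ennreal D * emeasure lborel {0..\<delta>} < \<infinity>"
    using fin \<delta> by (simp add: ennreal_mult_less_top less_top ennreal_mult_eq_top_iff)
  show False using leD[OF A] B by blast
qed



theorem lemma5p2:
  fixes M :: "'a::metric_space measure" and p :: real and x0 :: 'a and \<Omega> :: "'a set"
  assumes space: "space M = UNIV"
    and borel_sets: "sets (borel :: 'a measure) \<subseteq> sets M"
    and complete: "complete_measure M"
    and balls: "\<And>x r. 0 < r \<Longrightarrow> 0 < emeasure M (ball x r) \<and> emeasure M (ball x r) < \<infinity>"
    and two_points: "\<exists>x y :: 'a. x \<noteq> y"
    and p: "1 < p"
    and \<Omega>: "bounded \<Omega>" "open \<Omega>" "x0 \<in> \<Omega>"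
    and div: "(\<exists>\<delta>>0. (\<integral>\<^sup>+ \<rho> \<in> {0<..<\<delta>}.
                 ennreal ((\<rho> / measure M (ball x0 \<rho>)) powr (1 / (p - 1))) \<partial>lborel) = \<infinity>)
            \<or> (\<exists>k0::nat. (\<Sum>k. ennreal ((2 powr (- real (k + k0) * p)
                   / measure M (ball x0 (2 powr (- real (k + k0))))) powr (1 / (p - 1)))) = \<infinity>)"
  shows "var_cap M p {x0} \<Omega> = 0 \<and> sobolev_cap M p {x0} = 0"
proof -
  have "\<exists>k0. (\<Sum>k. ennreal (vv M p x0 (k + k0))) = \<infinity>"
    using div
  proof
    assume "\<exists>\<delta>>0. (\<integral>\<^sup>+ \<rho> \<in> {0<..<\<delta>}.
                 ennreal ((\<rho> / measure M (ball x0 \<rho>)) powr (1 / (p - 1))) \<partial>lborel) = \<infinity>"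
    then obtain \<delta> where "0 < \<delta>" "(\<integral>\<^sup>+ \<rho> \<in> {0<..<\<delta>}.
                 ennreal ((\<rho> / measure M (ball x0 \<rho>)) powr (1 / (p - 1))) \<partial>lborel) = \<infinity>" by blast
    from int_to_disc[OF borel_sets balls p this] show ?thesis by blast
  next
    assume "\<exists>k0::nat. (\<Sum>k. ennreal ((2 powr (- real (k + k0) * p)
                   / measure M (ball x0 (2 powr (- real (k + k0))))) powr (1 / (p - 1)))) = \<infinity>"
    thus ?thesis unfolding vv_def by simp
  qed
  then obtain k0 where inf: "(\<Sum>k. ennreal (vv M p x0 (k + k0))) = \<infinity>" by blast
  have z: "emeasure M {x0} = 0" by (rule point_null[OF borel_sets balls p inf])
  have lim: "(\<lambda>j. emeasure M (ball x0 (rk j))) \<longlonglongrightarrow> 0" by (rule ball_small[OF borel_sets balls z])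
  obtain r where r: "0 < r" "ball x0 r \<subseteq> \<Omega>" using \<Omega>(2,3) open_contains_ball by blast
  have v0: "0 \<le> vv M p x0 k" for k by (simp add: vv_def)
  have key: "var_cap M p {x0} \<Omega> \<le> ennreal \<epsilon> \<and> sobolev_cap M p {x0} \<le> ennreal \<epsilon>" if \<epsilon>: "0 < \<epsilon>" for \<epsilon>
  proof -
    have e2: "0 < \<epsilon> / 2" using \<epsilon> by simp
    have ev1: "eventually (\<lambda>j. emeasure M (ball x0 (rk j)) < ennreal (\<epsilon> / 2)) sequentially"
      using order_tendstoD(2)[OF lim] e2 by simp
    have ev2: "eventually (\<lambda>j. rk j < r) sequentially"
      using order_tendstoD(2)[OF rk_lim r(1)] .
    obtain j where j1: "emeasure M (ball x0 (rk j)) < ennreal (\<epsilon> / 2)" and j2: "rk j < r"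
      using eventually_happens'[OF sequentially_bot eventually_conj[OF ev1 ev2]] by blast
    define B where "B = max 1 (((2 powr p) / (\<epsilon> / 2)) powr (1 / (p - 1)))"
    obtain N where N: "B \<le> (\<Sum>k\<in>{j..<N}. vv M p x0 k)"
      using partial_unbounded[OF v0 inf] by blast
    define S where "S = (\<Sum>k\<in>{j..<N}. vv M p x0 k)"
    have Spos: "0 < S" using N by (simp add: S_def B_def)
    obtain u g where u: "u \<in> newtonian M p" "1 \<le> u x0" "\<forall>x. rk j \<le> dist x x0 \<longrightarrow> u x = 0"
        "p_weak_upper_gradient M p u g"
        "(\<integral>\<^sup>+ x. epow p (g x) \<partial>M) \<le> ennreal (2 powr p * S powr (1 - p))"
        "newton_norm_p M p u \<le> emeasure M (ball x0 (rk j)) + ennreal (2 powr p * S powr (1 - p))"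
      using construction[OF space borel_sets balls p S_def Spos] by blast
    have E: "2 powr p * S powr (1 - p) \<le> \<epsilon> / 2"
      using N by (intro small_energy[OF p e2]) (auto simp: S_def B_def)
    have E': "ennreal (2 powr p * S powr (1 - p)) \<le> ennreal (\<epsilon> / 2)" using E by (rule ennreal_leI)
    have out: "\<forall>x\<in>-\<Omega>. u x = 0"
    proof
      fix x assume "x \<in> -\<Omega>"
      hence "x \<notin> ball x0 r" using r by auto
      hence "rk j \<le> dist x x0" using j2 by (simp add: dist_commute)
      thus "u x = 0" using u(3) by blast
    qed
    have "var_cap M p {x0} \<Omega> \<le> (INF g \<in> {g. p_weak_upper_gradient M p u g}. \<integral>\<^sup>+ x \<in> \<Omega>. epow p (g x) \<partial>M)"
      unfolding var_cap_def using u(1,2) out by (intro INF_lower) auto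
    also have "\<dots> \<le> (\<integral>\<^sup>+ x \<in> \<Omega>. epow p (g x) \<partial>M)"
      using u(4) by (intro INF_lower) auto
    also have "\<dots> \<le> (\<integral>\<^sup>+ x. epow p (g x) \<partial>M)"
      by (rule nn_integral_mono) (auto simp: indicator_def)
    also have "\<dots> \<le> ennreal (\<epsilon> / 2)" using u(5) E' by (rule order_trans)
    also have "\<dots> \<le> ennreal \<epsilon>" using \<epsilon> by (intro ennreal_leI) simp
    finally have V: "var_cap M p {x0} \<Omega> \<le> ennreal \<epsilon>" .
    have "sobolev_cap M p {x0} \<le> newton_norm_p M p u"
      unfolding sobolev_cap_def using u(1,2) by (intro INF_lower) auto
    also have "\<dots> \<le> emeasure M (ball x0 (rk j)) + ennreal (2 powr p * S powr (1 - p))" by (rule u(6))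
    also have "\<dots> \<le> ennreal (\<epsilon> / 2) + ennreal (\<epsilon> / 2)"
      using j1 E' by (intro add_mono) auto
    also have "\<dots> = ennreal \<epsilon>" using \<epsilon> by (simp flip: ennreal_plus)
    finally have Sb: "sobolev_cap M p {x0} \<le> ennreal \<epsilon>" .
    show ?thesis using V Sb by simp
  qed
  have "var_cap M p {x0} \<Omega> \<le> 0"
    by (rule ennreal_le_epsilon) (use key in simp)
  moreover have "sobolev_cap M p {x0} \<le> 0"
    by (rule ennreal_le_epsilon) (use key in simp)
  ultimately show ?thesis by simp
qed

end
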